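(* In the setting of the context, assume $\mathcal W\subseteq\mathcal S$, that $(s_k)$ and $(w_k)$ are orthonormal bases of $\mathcal S$ and $\mathcal W$, and let $p_j:=\|v_j\|^2/n$ for $j\in\mathbb N$. Then $p$ is a probability distribution, and assuming $R'<\infty$ for this $p$, for every $f\in\mathcal H$ and $\delta\in(0,1)$, if $m\ge\frac83n\log(2n/\delta)$ then with probability at least $1-\delta$ the matrix $\widehat\Sigma_\Omega$ is invertible, the weighted least-squares problem $\operatorname{argmin}_{x\in\mathbb C^n}\sum_{t=1}^mp_{i_t}^{-1}|\langle W\iota_nx,s_{i_t}\rangle-\langle f,s_{i_t}\rangle|^2$ has a unique solution $\tilde x$, and $\tilde f:=W\iota_n\tilde x$ satisfies $\|f-\tilde f\|\le\|P_{\mathcal W_n^\perp}f\|(1+K_{n,\Omega}^2)^{1/2}$ with $K_{n,\Omega}:=\|W\iota_n\widehat\Sigma_\Omega^{-1}\widehat\Gamma_\Omega\|$.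
   Context: Let $\mathcal H$ be a separable complex Hilbert space, $\ell^2=\ell^2(\mathbb N)$ with canonical basis $(e_j)$; $a\otimes b$ denotes $x\mapsto\langle x,b\rangle a$; $\iota_n:\mathbb C^n\to\ell^2$, $\iota_n(x_1,\dots,x_n)=(x_1,\dots,x_n,0,\dots)$. $(s_k)_{k\in\mathbb N}$ and $(w_k)_{k\in\mathbb N}$ have closed spans $\mathcal S,\mathcal W$. Synthesis operators $Sx=\sum_kx_ks_k$, $Wx=\sum_kx_kw_k$; $U:=S^*W$. $\mathcal W_n:=\operatorname{span}\{w_1,\dots,w_n\}$, $P_{\mathcal W_n^\perp}$ orthogonal projection onto $\mathcal W_n^\perp$. $\Sigma:=\iota_n^*U^*U\iota_n$, $v_j:=\iota_n^*U^*e_j\in\mathbb C^n$, $u_j:=P_{\mathcal W_n^\perp}s_j$, $R':=\sup_{j:p_j>0}\|u_j\|^2/p_j$. $i_1,\dots,i_m$ i.i.d. with law $p$, $Q_\Omega:=\frac1m\sum_t\frac{e_{i_t}\otimes e_{i_t}}{p_{i_t}}$, $\widehat\Sigma_\Omega:=\iota_n^*U^*Q_\Omega U\iota_n$, $\widehat\Gamma_\Omega:=\iota_n^*U^*Q_\Omega S^*P_{\mathcal W_n^\perp}$. *)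

theory Defs
  imports "HOL-Analysis.Analysis" "HOL-Probability.Probability" "Jordan_Normal_Form.Matrix"
begin

(* A complex Hilbert space: a Banach space (real normed, complete) 'a equipped with a
   complex scalar multiplication sc extending the real one, and an inner product ip
   (linear in the first, conjugate-linear in the second argument) inducing the norm. *)
definition complex_hilbert ::
  "(complex \<Rightarrow> 'a::{real_normed_vector,complete_space} \<Rightarrow> 'a) \<Rightarrow> ('a \<Rightarrow> 'a \<Rightarrow> complex) \<Rightarrow> bool" where
  "complex_hilbert sc ip \<longleftrightarrow>
     (\<forall>x. sc 1 x = x) \<and> (\<forall>a b x. sc a (sc b x) = sc (a * b) x) \<and>
     (\<forall>a x y. sc a (x + y) = sc a x + sc a y) \<and> (\<forall>a b x. sc (a + b) x = sc a x + sc b x) \<and>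
     (\<forall>r x. sc (complex_of_real r) x = scaleR r x) \<and>
     (\<forall>x y. ip y x = cnj (ip x y)) \<and> (\<forall>x y z. ip (x + y) z = ip x z + ip y z) \<and>
     (\<forall>a x y. ip (sc a x) y = a * ip x y) \<and>
     (\<forall>x. ip x x = complex_of_real ((norm x)\<^sup>2))"

definition separable_space :: "'a::topological_space itself \<Rightarrow> bool" where
  "separable_space _ \<longleftrightarrow> (\<exists>D::'a set. countable D \<and> closure D = UNIV)"

definition lspan :: "(complex \<Rightarrow> 'a \<Rightarrow> 'a::real_vector) \<Rightarrow> 'a set \<Rightarrow> 'a set" where
  "lspan sc A = {x. \<exists>F c. finite F \<and> F \<subseteq> A \<and> x = (\<Sum>a\<in>F. sc (c a) a)}"

definition cspan :: "(complex \<Rightarrow> 'a \<Rightarrow> 'a::real_normed_vector) \<Rightarrow> 'a set \<Rightarrow> 'a set" where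
  "cspan sc A = closure (lspan sc A)"

definition orthonormal_seq :: "('a \<Rightarrow> 'a \<Rightarrow> complex) \<Rightarrow> (nat \<Rightarrow> 'a) \<Rightarrow> bool" where
  "orthonormal_seq ip s \<longleftrightarrow> (\<forall>j k. ip (s j) (s k) = (if j = k then 1 else 0))"

definition orth :: "('a \<Rightarrow> 'a \<Rightarrow> complex) \<Rightarrow> 'a set \<Rightarrow> 'a set" where
  "orth ip M = {x. \<forall>y\<in>M. ip x y = 0}"

definition oproj :: "('a \<Rightarrow> 'a \<Rightarrow> complex) \<Rightarrow> 'a set \<Rightarrow> 'a \<Rightarrow> 'a::ab_group_add" where
  "oproj ip M x = (THE y. y \<in> M \<and> (\<forall>z\<in>M. ip (x - y) z = 0))"

(* Indices are 0-based: w 0, ..., w (n-1) span W_n; sample t ranges over t < m.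
   W iota_n x *)
definition synth_n :: "(complex \<Rightarrow> 'a \<Rightarrow> 'a::real_vector) \<Rightarrow> (nat \<Rightarrow> 'a) \<Rightarrow> nat \<Rightarrow> complex vec \<Rightarrow> 'a" where
  "synth_n sc w n x = (\<Sum>k<n. sc (x $ k) (w k))"

(* v_j = iota_n^* U^* e_j = iota_n^* W^* s_j, i.e. (v_j)_k = <s_j, w_k> *)
definition vvec :: "('a \<Rightarrow> 'a \<Rightarrow> complex) \<Rightarrow> (nat \<Rightarrow> 'a) \<Rightarrow> (nat \<Rightarrow> 'a) \<Rightarrow> nat \<Rightarrow> nat \<Rightarrow> complex vec" where
  "vvec ip s w n j = vec n (\<lambda>k. ip (s j) (w k))"

definition pdist :: "('a \<Rightarrow> 'a \<Rightarrow> complex) \<Rightarrow> (nat \<Rightarrow> 'a) \<Rightarrow> (nat \<Rightarrow> 'a) \<Rightarrow> nat \<Rightarrow> nat \<Rightarrow> real" where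
  "pdist ip s w n j = (\<Sum>k<n. (cmod (vvec ip s w n j $ k))\<^sup>2) / real n"

(* Sigma_hat = iota_n^* U^* Q_Omega U iota_n = (1/m) sum_t p_{i_t}^{-1} v_{i_t} v_{i_t}^*,
   with samples i_t = om t *)
definition Sigma_hat :: "('a \<Rightarrow> 'a \<Rightarrow> complex) \<Rightarrow> (nat \<Rightarrow> 'a) \<Rightarrow> (nat \<Rightarrow> 'a) \<Rightarrow> nat \<Rightarrow> (nat \<Rightarrow> real)
     \<Rightarrow> nat \<Rightarrow> (nat \<Rightarrow> nat) \<Rightarrow> complex mat" where
  "Sigma_hat ip s w n p m om = mat n n (\<lambda>(k, l).
      (\<Sum>t<m. ip (s (om t)) (w k) * ip (w l) (s (om t)) / complex_of_real (p (om t))) / of_nat m)"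

(* Gamma_hat g = iota_n^* U^* Q_Omega S^* P_{W_n^perp} g *)
definition Gamma_hat :: "(complex \<Rightarrow> 'a \<Rightarrow> 'a::real_normed_vector) \<Rightarrow> ('a \<Rightarrow> 'a \<Rightarrow> complex)
     \<Rightarrow> (nat \<Rightarrow> 'a) \<Rightarrow> (nat \<Rightarrow> 'a) \<Rightarrow> nat \<Rightarrow> (nat \<Rightarrow> real) \<Rightarrow> nat \<Rightarrow> (nat \<Rightarrow> nat) \<Rightarrow> 'a \<Rightarrow> complex vec" where
  "Gamma_hat sc ip s w n p m om g = vec n (\<lambda>k.
      (\<Sum>t<m. ip (oproj ip (orth ip (lspan sc (w ` {..<n}))) g) (s (om t)) * ip (s (om t)) (w k)
              / complex_of_real (p (om t))) / of_nat m)"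

definition wls_obj :: "(complex \<Rightarrow> 'a \<Rightarrow> 'a::real_vector) \<Rightarrow> ('a \<Rightarrow> 'a \<Rightarrow> complex)
     \<Rightarrow> (nat \<Rightarrow> 'a) \<Rightarrow> (nat \<Rightarrow> 'a) \<Rightarrow> nat \<Rightarrow> (nat \<Rightarrow> real) \<Rightarrow> nat \<Rightarrow> (nat \<Rightarrow> nat) \<Rightarrow> 'a \<Rightarrow> complex vec \<Rightarrow> real" where
  "wls_obj sc ip s w n p m om f x =
     (\<Sum>t<m. (cmod (ip (synth_n sc w n x) (s (om t)) - ip f (s (om t))))\<^sup>2 / p (om t))"

end

theory Submission
  imports Defs "Jordan_Normal_Form.Determinant"
begin

locale hilb =
  fixes sc :: "complex \<Rightarrow> 'a::{real_normed_vector,complete_space} \<Rightarrow> 'a"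
    and ip :: "'a \<Rightarrow> 'a \<Rightarrow> complex"
  assumes sc_one: "sc 1 x = x"
    and sc_assoc: "sc a (sc b x) = sc (a * b) x"
    and sc_add: "sc a (x + y) = sc a x + sc a y"
    and sc_addl: "sc (a + b) x = sc a x + sc b x"
    and sc_real: "sc (complex_of_real r) x = scaleR r x"
    and ip_sym: "ip y x = cnj (ip x y)"
    and ip_add: "ip (x + y) z = ip x z + ip y z"
    and ip_sc: "ip (sc a x) y = a * ip x y"
    and ip_norm: "ip x x = complex_of_real ((norm x)\<^sup>2)"
begin

lemma ip_zero[simp]: "ip 0 y = 0"
  using ip_add[of 0 0 y] by simp

lemma ip_zero_right[simp]: "ip y 0 = 0"
  using ip_sym[of 0 y] by simp

lemma ip_add_right: "ip x (y + z) = ip x y + ip x z"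
  using ip_sym ip_add by (metis complex_cnj_add)

lemma ip_minus: "ip (- x) y = - ip x y"
  using ip_add[of x "-x" y] by (simp add: eq_neg_iff_add_eq_0 add.commute)

lemma ip_minus_right: "ip x (- y) = - ip x y"
  using ip_sym ip_minus by (metis complex_cnj_minus)

lemma ip_diff: "ip (x - y) z = ip x z - ip y z"
  using ip_add[of x "-y" z] ip_minus by simp

lemma ip_diff_right: "ip x (y - z) = ip x y - ip x z"
  using ip_sym ip_diff by (metis complex_cnj_diff)

lemma ip_sc_right: "ip x (sc a y) = cnj a * ip x y"
  using ip_sym ip_sc by (metis complex_cnj_mult complex_cnj_cnj)

lemma ip_sum: "ip (\<Sum>i\<in>I. f i) z = (\<Sum>i\<in>I. ip (f i) z)"
  by (induct I rule: infinite_finite_induct) (auto simp: ip_add)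

lemma ip_sum_right: "ip z (\<Sum>i\<in>I. f i) = (\<Sum>i\<in>I. ip z (f i))"
  by (induct I rule: infinite_finite_induct) (auto simp: ip_add_right)

lemma sc_zero[simp]: "sc 0 x = 0"
  using sc_real[of 0 x] by simp

lemma sc_zero_right[simp]: "sc a 0 = 0"
  using sc_add[of a 0 0] by simp

lemma sc_sum: "sc a (\<Sum>i\<in>I. f i) = (\<Sum>i\<in>I. sc a (f i))"
  by (induct I rule: infinite_finite_induct) (auto simp: sc_add)

lemma sc_suml: "sc (\<Sum>i\<in>I. f i) x = (\<Sum>i\<in>I. sc (f i) x)"
  by (induct I rule: infinite_finite_induct) (auto simp: sc_addl)

lemma sc_minus: "sc a (- x) = - sc a x"
  using sc_add[of a x "-x"] by (simp add: eq_neg_iff_add_eq_0 add.commute)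

lemma sc_diff: "sc a (x - y) = sc a x - sc a y"
  using sc_add[of a x "-y"] sc_minus by simp

lemma sc_minusl: "sc (- a) x = - sc a x"
  using sc_addl[of a "-a" x] by (simp add: eq_neg_iff_add_eq_0 add.commute)

lemma sc_diffl: "sc (a - b) x = sc a x - sc b x"
  using sc_addl[of a "-b" x] sc_minusl by simp

lemma norm_sq_ip: "(norm x)\<^sup>2 = Re (ip x x)"
  using ip_norm[of x] by simp

lemma ip_self_Im: "Im (ip x x) = 0"
  using ip_norm[of x] by simp

lemma ip_self_eq0: "ip x x = 0 \<longleftrightarrow> x = 0"
  using ip_norm[of x] by simp

lemma norm_add_sq: "(norm (x + y))\<^sup>2 = (norm x)\<^sup>2 + (norm y)\<^sup>2 + 2 * Re (ip x y)"
proof -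
  have "(norm (x + y))\<^sup>2 = Re (ip x x + ip x y + ip y x + ip y y)"
    by (simp add: norm_sq_ip ip_add ip_add_right)
  also have "\<dots> = (norm x)\<^sup>2 + (norm y)\<^sup>2 + 2 * Re (ip x y)"
    using ip_sym[of x y] by (simp add: norm_sq_ip)
  finally show ?thesis .
qed

lemma norm_diff_sq: "(norm (x - y))\<^sup>2 = (norm x)\<^sup>2 + (norm y)\<^sup>2 - 2 * Re (ip x y)"
  using norm_add_sq[of x "-y"] by (simp add: ip_minus_right)

lemma norm_sc: "norm (sc a x) = cmod a * norm x"
proof -
  have e: "ip (sc a x) (sc a x) = (a * cnj a) * ip x x"
    by (simp add: ip_sc ip_sc_right mult.assoc)
  have "(norm (sc a x))\<^sup>2 = Re ((a * cnj a) * ip x x)"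
    by (simp add: norm_sq_ip e)
  also have "\<dots> = ((cmod a) * norm x)\<^sup>2"
    unfolding complex_mult_cnj ip_norm by (simp add: power_mult_distrib cmod_power2 del: of_real_power)
  finally show ?thesis
    by (simp add: power2_eq_imp_eq)
qed

lemma ip_scaleR: "ip (scaleR r x) y = r *\<^sub>R ip x y"
  using ip_sc[of "complex_of_real r" x y] sc_real by (simp add: scaleR_conv_of_real)

lemma sc_scaleR_left: "sc (r *\<^sub>R a) x = r *\<^sub>R sc a x"
  by (metis mult.commute sc_assoc sc_real scaleR_conv_of_real)

lemma cauchy_schwarz: "cmod (ip x y) \<le> norm x * norm y"
proof (cases "y = 0")
  case True then show ?thesis by simp
next
  case False
  define c where "c = ip x y / complex_of_real ((norm y)\<^sup>2)"
  have ny: "norm y > 0" using False by simp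
  have cc: "cmod c = cmod (ip x y) / (norm y)\<^sup>2"
    unfolding c_def norm_divide by (simp del: of_real_power add: of_real_power[symmetric])
  have e1: "(cmod c * norm y)\<^sup>2 = (cmod (ip x y))\<^sup>2 / (norm y)\<^sup>2"
    using ny unfolding cc by (simp add: field_simps power2_eq_square)
  have e2a: "cnj c * ip x y = (ip x y * cnj (ip x y)) / complex_of_real ((norm y)\<^sup>2)"
    by (simp add: c_def mult.commute)
  have e2: "cnj c * ip x y = complex_of_real ((cmod (ip x y))\<^sup>2 / (norm y)\<^sup>2)"
    unfolding e2a by (simp add: complex_norm_square[symmetric])
  have "0 \<le> (norm (x - sc c y))\<^sup>2" by simp
  also have "\<dots> = (norm x)\<^sup>2 + (cmod c * norm y)\<^sup>2 - 2 * Re (cnj c * ip x y)"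
    by (simp add: norm_diff_sq norm_sc ip_sc_right)
  finally have "0 \<le> (norm x)\<^sup>2 + (cmod c * norm y)\<^sup>2 - 2 * Re (cnj c * ip x y)" .
  then have "(cmod (ip x y))\<^sup>2 / (norm y)\<^sup>2 \<le> (norm x)\<^sup>2"
    unfolding e1 e2 Re_complex_of_real by simp
  then have "(cmod (ip x y))\<^sup>2 \<le> (norm x)\<^sup>2 * (norm y)\<^sup>2"
    using ny by (simp add: field_simps)
  then have "(cmod (ip x y))\<^sup>2 \<le> (norm x * norm y)\<^sup>2" by (simp add: power_mult_distrib)
  then show ?thesis
    by (meson mult_nonneg_nonneg norm_ge_zero power2_le_imp_le)
qed

lemma bounded_linear_ip: "bounded_linear (\<lambda>g. ip g z)"
proof (rule bounded_linear_intro[where K="norm z"])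
  show "ip (x + y) z = ip x z + ip y z" for x y by (rule ip_add)
  show "ip (r *\<^sub>R x) z = r *\<^sub>R ip x z" for r x by (rule ip_scaleR)
  show "norm (ip x z) \<le> norm x * norm z" for x using cauchy_schwarz by simp
qed

lemma bounded_linear_sc: "bounded_linear \<phi> \<Longrightarrow> bounded_linear (\<lambda>g. sc (\<phi> g) y)"
proof -
  assume b: "bounded_linear \<phi>"
  then interpret bounded_linear \<phi> .
  obtain K where K: "\<And>x. norm (\<phi> x) \<le> norm x * K" using bounded by blast
  show ?thesis
  proof (rule bounded_linear_intro[where K="K * norm y"])
    show "sc (\<phi> (x + z)) y = sc (\<phi> x) y + sc (\<phi> z) y" for x z by (simp add: add sc_addl)
    show "sc (\<phi> (r *\<^sub>R x)) y = r *\<^sub>R sc (\<phi> x) y" for r x by (simp add: scale sc_scaleR_left)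
    show "norm (sc (\<phi> x) y) \<le> norm x * (K * norm y)" for x
      using mult_right_mono[OF K[of x] norm_ge_zero[of y]] by (simp add: norm_sc mult.assoc)
  qed
qed

end

lemma hilbI: "complex_hilbert sc ip \<Longrightarrow> hilb sc ip"
  unfolding complex_hilbert_def hilb_def by (elim conjE, intro conjI; blast)

context hilb begin

lemma on_inj: "orthonormal_seq ip e \<Longrightarrow> inj e"
  unfolding orthonormal_seq_def inj_def by (metis zero_neq_one)

lemma on_ip: "orthonormal_seq ip e \<Longrightarrow> ip (e i) (e j) = (if i = j then 1 else 0)"
  unfolding orthonormal_seq_def by blast

lemma on_sum_ip:
  assumes e: "orthonormal_seq ip e" and J: "finite J"
  shows "ip (\<Sum>j\<in>J. sc (c j) (e j)) (e k) = (if k \<in> J then c k else 0)"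
proof -
  have "ip (\<Sum>j\<in>J. sc (c j) (e j)) (e k) = (\<Sum>j\<in>J. c j * (if j = k then 1 else 0))"
    by (simp add: ip_sum ip_sc on_ip[OF e])
  also have "\<dots> = (if k \<in> J then c k else 0)"
    using J by (simp add: if_distrib[of "\<lambda>z. _ * z"] sum.delta cong: if_cong)
  finally show ?thesis .
qed

lemma on_sum_norm:
  assumes e: "orthonormal_seq ip e" and J: "finite J"
  shows "(norm (\<Sum>j\<in>J. sc (c j) (e j)))\<^sup>2 = (\<Sum>j\<in>J. (cmod (c j))\<^sup>2)"
proof -
  have "ip (\<Sum>j\<in>J. sc (c j) (e j)) (\<Sum>j\<in>J. sc (c j) (e j))
      = (\<Sum>k\<in>J. cnj (c k) * ip (\<Sum>j\<in>J. sc (c j) (e j)) (e k))"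
    by (simp add: ip_sum_right ip_sc_right)
  also have "\<dots> = (\<Sum>k\<in>J. complex_of_real ((cmod (c k))\<^sup>2))"
    using J by (simp add: on_sum_ip[OF e J] complex_mult_cnj cmod_power2 mult.commute del: of_real_power)
  finally show ?thesis by (simp add: norm_sq_ip)
qed

lemma on_approx:
  assumes e: "orthonormal_seq ip e" and J: "finite J"
  shows "(norm (x - (\<Sum>j\<in>J. sc (c j) (e j))))\<^sup>2
     = (norm x)\<^sup>2 - (\<Sum>j\<in>J. (cmod (ip x (e j)))\<^sup>2) + (\<Sum>j\<in>J. (cmod (c j - ip x (e j)))\<^sup>2)"
proof -
  let ?y = "\<Sum>j\<in>J. sc (c j) (e j)"
  have ipxy: "ip x ?y = (\<Sum>j\<in>J. cnj (c j) * ip x (e j))"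
    by (simp add: ip_sum_right ip_sc_right)
  have "(norm (x - ?y))\<^sup>2 = (norm x)\<^sup>2 + (\<Sum>j\<in>J. (cmod (c j))\<^sup>2) - 2 * (\<Sum>j\<in>J. Re (cnj (c j) * ip x (e j)))"
    by (simp add: norm_diff_sq on_sum_norm[OF e J] ipxy Re_sum)
  also have "\<dots> = (norm x)\<^sup>2 - (\<Sum>j\<in>J. (cmod (ip x (e j)))\<^sup>2) + (\<Sum>j\<in>J. (cmod (c j - ip x (e j)))\<^sup>2)"
  proof -
    have "\<And>j. (cmod (c j - ip x (e j)))\<^sup>2 = (cmod (c j))\<^sup>2 + (cmod (ip x (e j)))\<^sup>2 - 2 * Re (cnj (c j) * ip x (e j))"
      unfolding cmod_power2 by (simp add: power2_eq_square algebra_simps)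
    then show ?thesis by (simp add: sum.distrib sum_subtractf sum_distrib_left)
  qed
  finally show ?thesis .
qed

lemma bessel:
  assumes e: "orthonormal_seq ip e" and J: "finite J"
  shows "(\<Sum>j\<in>J. (cmod (ip x (e j)))\<^sup>2) \<le> (norm x)\<^sup>2"
proof -
  have "0 \<le> (norm (x - (\<Sum>j\<in>J. sc (ip x (e j)) (e j))))\<^sup>2" by simp
  then show ?thesis unfolding on_approx[OF e J] by simp
qed

lemma lspan_on:
  assumes e: "orthonormal_seq ip e" and y: "y \<in> lspan sc (range e)"
  shows "\<exists>J c. finite J \<and> y = (\<Sum>j\<in>J. sc (c j) (e j))"
proof -
  have "\<exists>F c. finite F \<and> F \<subseteq> range e \<and> y = (\<Sum>a\<in>F. sc (c a) a)"
    using y unfolding lspan_def by (simp only: mem_Collect_eq)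
  then obtain F c where F1: "finite F" and F2: "F \<subseteq> range e" and yF: "y = (\<Sum>a\<in>F. sc (c a) a)"
    by (elim exE conjE)
  define J where "J = e -` F"
  have inj: "inj e" by (rule on_inj[OF e])
  have FJ: "F = e ` J" unfolding J_def image_vimage_eq using F2 by (simp add: Int_absorb2)
  have finJ: "finite J" unfolding J_def by (rule finite_vimageI[OF F1 inj])
  have "y = (\<Sum>j\<in>J. sc (c (e j)) (e j))"
    unfolding yF FJ by (rule sum.reindex[unfolded comp_def]) (rule inj_on_subset[OF inj], simp)
  then show ?thesis using finJ by (intro exI[of _ J] exI[of _ "\<lambda>j. c (e j)"] conjI)
qed

lemma parseval:
  assumes e: "orthonormal_seq ip e" and x: "x \<in> cspan sc (range e)"
  shows "((\<lambda>j. (cmod (ip x (e j)))\<^sup>2) has_sum (norm x)\<^sup>2) UNIV"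
proof -
  let ?f = "\<lambda>j. (cmod (ip x (e j)))\<^sup>2"
  let ?S = "SUP F\<in>{F. finite F \<and> F \<subseteq> UNIV}. sum ?f F"
  have bdd: "bdd_above (sum ?f ` {F. F \<subseteq> UNIV \<and> finite F})"
    using bessel[OF e] by (auto simp: bdd_above_def)
  have hs: "(?f has_sum ?S) UNIV"
    by (rule nonneg_bdd_above_has_sum) (use bdd in auto)
  have bdd': "bdd_above (sum ?f ` {F. finite F \<and> F \<subseteq> UNIV})"
    using bdd by (simp add: conj_commute)
  have le: "?S \<le> (norm x)\<^sup>2"
    by (rule cSUP_least) (use bessel[OF e] in auto)
  have ge: "(norm x)\<^sup>2 \<le> ?S + eps" if eps: "eps > 0" for eps
  proof -
    have "x \<in> closure (lspan sc (range e))" using x unfolding cspan_def .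
    then have "\<forall>d>0. \<exists>y\<in>lspan sc (range e). dist y x < d"
      by (simp add: closure_approachable)
    moreover have "sqrt eps > 0" using eps by simp
    ultimately obtain y where y: "y \<in> lspan sc (range e)" and d: "dist y x < sqrt eps"
      by blast
    obtain J c where J: "finite J" and yJ: "y = (\<Sum>j\<in>J. sc (c j) (e j))"
      using lspan_on[OF e y] by blast
    have "(norm x)\<^sup>2 - (\<Sum>j\<in>J. (cmod (ip x (e j)))\<^sup>2) \<le> (norm (x - y))\<^sup>2"
      unfolding yJ on_approx[OF e J] by (simp add: sum_nonneg)
    also have "\<dots> < eps"
    proof -
      have "norm (x - y) < sqrt eps" using d by (simp add: dist_norm norm_minus_commute)
      then have "(norm (x - y))\<^sup>2 < (sqrt eps)\<^sup>2" by (rule power_strict_mono) auto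
      then show ?thesis using eps by simp
    qed
    also have "(\<Sum>j\<in>J. (cmod (ip x (e j)))\<^sup>2) \<le> ?S"
      by (rule cSUP_upper2[OF bdd', of J]) (use J in auto)
    ultimately show ?thesis by linarith
  qed
  have "(norm x)\<^sup>2 \<le> ?S"
    by (rule field_le_epsilon) (rule ge)
  then have "?S = (norm x)\<^sup>2"
    using le by linarith
  then show ?thesis using hs by simp
qed

end

no_notation vec_nth (infixl \<open>$\<close> 90)

definition cip :: "nat \<Rightarrow> complex vec \<Rightarrow> complex vec \<Rightarrow> complex" where
  "cip n u v = (\<Sum>k<n. u $ k * cnj (v $ k))"

lemma cip_sym: "cip n v u = cnj (cip n u v)"
  unfolding cip_def by (simp add: mult.commute)

lemma cip_self: "cip n u u = complex_of_real (\<Sum>k<n. (cmod (u $ k))\<^sup>2)"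
  unfolding cip_def by (simp add: complex_mult_cnj cmod_power2 del: of_real_power)

lemma cip_self_Re: "Re (cip n u u) = (\<Sum>k<n. (cmod (u $ k))\<^sup>2)"
  by (simp add: cip_self)

lemma cip_zero_iff: "u \<in> carrier_vec n \<Longrightarrow> cip n u u = 0 \<longleftrightarrow> u = 0\<^sub>v n"
proof -
  assume u: "u \<in> carrier_vec n"
  have "cip n u u = 0 \<longleftrightarrow> (\<Sum>k<n. (cmod (u $ k))\<^sup>2) = 0" by (simp only: cip_self of_real_eq_0_iff)
  also have "\<dots> \<longleftrightarrow> (\<forall>k<n. u $ k = 0)" by (auto simp: sum_nonneg_eq_0_iff)
  also have "\<dots> \<longleftrightarrow> u = 0\<^sub>v n" using u by (auto simp: vec_eq_iff)
  finally show ?thesis .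
qed

lemma has_sum_finsum:
  fixes f :: "'i \<Rightarrow> 'b \<Rightarrow> real"
  assumes "finite I" and "\<And>i. i \<in> I \<Longrightarrow> (f i has_sum S i) A"
  shows "((\<lambda>x. \<Sum>i\<in>I. f i x) has_sum (\<Sum>i\<in>I. S i)) A"
  using assms
proof (induct I rule: finite_induct)
  case empty then show ?case by simp
next
  case (insert i I)
  then show ?case by (auto intro!: has_sum_add)
qed

locale setting = hilb sc ip for sc :: "complex \<Rightarrow> 'a::{real_normed_vector,complete_space} \<Rightarrow> 'a" and ip +
  fixes s w :: "nat \<Rightarrow> 'a" and n :: nat
  assumes n_pos: "n > 0"
    and WS: "cspan sc (range w) \<subseteq> cspan sc (range s)"
    and ons: "orthonormal_seq ip s" and onw: "orthonormal_seq ip w"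
begin

abbreviation "vv \<equiv> vvec ip s w n"
abbreviation "p \<equiv> pdist ip s w n"
abbreviation "synth \<equiv> synth_n sc w n"
abbreviation "ci \<equiv> cip n"

lemma vv_carrier[simp]: "vv j \<in> carrier_vec n"
  by (simp add: vvec_def)

lemma vv_index[simp]: "k < n \<Longrightarrow> vv j $ k = ip (s j) (w k)"
  by (simp add: vvec_def)

lemma p_alt: "p j = Re (ci (vv j) (vv j)) / real n"
  by (simp add: pdist_def cip_self_Re)

lemma p_nonneg: "p j \<ge> 0"
  by (simp add: pdist_def sum_nonneg)

lemma p_zero: "p j = 0 \<Longrightarrow> vv j = 0\<^sub>v n"
proof -
  assume "p j = 0"
  then have "Re (ci (vv j) (vv j)) = 0" using n_pos by (simp add: p_alt)
  then have "ci (vv j) (vv j) = 0" by (simp add: cip_self)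
  then show ?thesis using cip_zero_iff[of "vv j" n] by simp
qed

lemma w_in_cspan: "w k \<in> cspan sc (range s)"
proof -
  have "w k \<in> lspan sc (range w)"
    unfolding lspan_def
    by (rule CollectI, rule exI[of _ "{w k}"], rule exI[of _ "\<lambda>_. 1"]) (simp add: sc_one)
  then have "w k \<in> cspan sc (range w)" unfolding cspan_def using closure_subset by blast
  then show ?thesis using WS by blast
qed

lemma p_has_sum: "(p has_sum 1) UNIV"
proof -
  have "((\<lambda>j. (cmod (ip (s j) (w k)))\<^sup>2) has_sum 1) UNIV" for k
  proof -
    have "((\<lambda>j. (cmod (ip (w k) (s j)))\<^sup>2) has_sum (norm (w k))\<^sup>2) UNIV"
      by (rule parseval[OF ons w_in_cspan])
    moreover have "norm (w k) = 1"
    proof -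
      have "complex_of_real ((norm (w k))\<^sup>2) = 1" using on_ip[OF onw, of k k] ip_norm[of "w k"] by simp
      then have "(norm (w k))\<^sup>2 = 1" by (simp only: of_real_eq_1_iff)
      then show ?thesis using norm_ge_zero[of "w k"] by (simp add: power2_eq_1_iff)
    qed
    moreover have "cmod (ip (w k) (s j)) = cmod (ip (s j) (w k))" for j
      by (subst ip_sym) simp
    ultimately show ?thesis by simp
  qed
  then have "((\<lambda>j. \<Sum>k<n. (cmod (ip (s j) (w k)))\<^sup>2) has_sum (\<Sum>k<n. 1)) UNIV"
    by (intro has_sum_finsum) auto
  then have "((\<lambda>j. (\<Sum>k<n. (cmod (ip (s j) (w k)))\<^sup>2) * inverse (real n)) has_sum (real n * inverse (real n))) UNIV"
    by (intro has_sum_cmult_left) simp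
  moreover have "p = (\<lambda>j. (\<Sum>k<n. (cmod (ip (s j) (w k)))\<^sup>2) * inverse (real n))"
    by (rule ext) (simp add: pdist_def divide_inverse)
  ultimately show ?thesis using n_pos by simp
qed

lemma synth_ip: "ip (synth x) (s j) = cnj (ci (vv j) x)"
proof -
  have "ip (synth x) (s j) = (\<Sum>k<n. x $ k * ip (w k) (s j))"
    by (simp add: synth_n_def ip_sum ip_sc)
  also have "\<dots> = (\<Sum>k<n. x $ k * cnj (ip (s j) (w k)))"
    by (subst ip_sym) simp
  also have "\<dots> = cnj (ci (vv j) x)"
    by (simp add: cip_def mult.commute)
  finally show ?thesis .
qed

lemma synth_norm: "(norm (synth x))\<^sup>2 = (\<Sum>k<n. (cmod (x $ k))\<^sup>2)"
  unfolding synth_n_def by (rule on_sum_norm[OF onw]) simp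

lemma frame_bessel:
  assumes F: "finite F"
  shows "(\<Sum>j\<in>F. (cmod (ci (vv j) u))\<^sup>2) \<le> Re (ci u u)"
proof -
  have "(\<Sum>j\<in>F. (cmod (ci (vv j) u))\<^sup>2) = (\<Sum>j\<in>F. (cmod (ip (synth u) (s j)))\<^sup>2)"
    by (simp add: synth_ip)
  also have "\<dots> \<le> (norm (synth u))\<^sup>2" by (rule bessel[OF ons F])
  also have "\<dots> = Re (ci u u)" by (simp add: synth_norm cip_self_Re)
  finally show ?thesis .
qed

end

lemma sum_delta_mult:
  fixes i d :: nat
  assumes "i < d"
  shows "(\<Sum>l<d. f l * (if l = i then 1 else 0)) = (f i :: 'b::comm_semiring_1)"
proof -
  have "(\<Sum>l<d. f l * (if l = i then 1 else 0)) = (\<Sum>l<d. if l = i then f l else 0)"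
    by (rule sum.cong) auto
  also have "\<dots> = f i" using sum.delta[OF finite_lessThan[of d], of i f] assms by simp
  finally show ?thesis .
qed

definition onl :: "nat \<Rightarrow> complex vec list \<Rightarrow> bool" where
  "onl n U \<longleftrightarrow> (\<forall>i<length U. U ! i \<in> carrier_vec n) \<and>
     (\<forall>i<length U. \<forall>j<length U. cip n (U ! i) (U ! j) = (if i = j then 1 else 0))"

definition resid :: "nat \<Rightarrow> complex vec list \<Rightarrow> complex vec \<Rightarrow> complex vec" where
  "resid n U v = vec n (\<lambda>k. v $ k - (\<Sum>l<length U. cip n v (U ! l) * U ! l $ k))"

definition nrm :: "nat \<Rightarrow> complex vec \<Rightarrow> complex vec" where
  "nrm n r = vec n (\<lambda>k. r $ k / complex_of_real (sqrt (Re (cip n r r))))"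

definition step :: "nat \<Rightarrow> complex vec list \<Rightarrow> complex vec \<Rightarrow> complex vec list" where
  "step n U v = (if resid n U v = 0\<^sub>v n then U else U @ [nrm n (resid n U v)])"

primrec proc :: "nat \<Rightarrow> (nat \<Rightarrow> complex vec) \<Rightarrow> complex vec list \<Rightarrow> (nat \<Rightarrow> nat) \<Rightarrow> nat \<Rightarrow> complex vec list" where
  "proc n V U om 0 = U"
| "proc n V U om (Suc m) = proc n V (step n U (V (om m))) om m"

lemma cip_lincomb:
  assumes "\<And>k. k < n \<Longrightarrow> v $ k = (\<Sum>l<d. a l * U ! l $ k)"
  shows "cip n v x = (\<Sum>l<d. a l * cip n (U ! l) x)"
proof -
  have "cip n v x = (\<Sum>k<n. (\<Sum>l<d. a l * U ! l $ k) * cnj (x $ k))"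
    unfolding cip_def using assms by simp
  also have "\<dots> = (\<Sum>l<d. a l * cip n (U ! l) x)"
    unfolding cip_def by (simp add: sum_distrib_right sum_distrib_left mult.assoc sum.swap[of _ "{..<n}"])
  finally show ?thesis .
qed

lemma cip_resid_gen:
  "cip n (vec n (\<lambda>k. v $ k - (\<Sum>l<d. a l * U ! l $ k))) u = cip n v u - (\<Sum>l<d. a l * cip n (U ! l) u)"
proof -
  have "cip n (vec n (\<lambda>k. v $ k - (\<Sum>l<d. a l * U ! l $ k))) u
      = (\<Sum>k<n. v $ k * cnj (u $ k) - (\<Sum>l<d. a l * U ! l $ k) * cnj (u $ k))"
    unfolding cip_def by (rule sum.cong) (simp_all add: left_diff_distrib)
  also have "\<dots> = cip n v u - (\<Sum>k<n. (\<Sum>l<d. a l * U ! l $ k) * cnj (u $ k))"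
    by (simp add: sum_subtractf cip_def)
  also have "(\<Sum>k<n. (\<Sum>l<d. a l * U ! l $ k) * cnj (u $ k)) = (\<Sum>l<d. a l * cip n (U ! l) u)"
    unfolding cip_def by (simp add: sum_distrib_right sum_distrib_left mult.assoc sum.swap[of _ "{..<n}"])
  finally show ?thesis .
qed

lemma cip_resid: "cip n (resid n U v) u = cip n v u - (\<Sum>l<length U. cip n v (U ! l) * cip n (U ! l) u)"
  unfolding resid_def by (rule cip_resid_gen)

lemma cip_resid_U:
  assumes "onl n U" "i < length U"
  shows "cip n (resid n U v) (U ! i) = 0"
proof -
  have d: "\<And>l. l < length U \<Longrightarrow> cip n (U ! l) (U ! i) = (if l = i then 1 else 0)"
    using assms unfolding onl_def by blast
  have "(\<Sum>l<length U. cip n v (U ! l) * cip n (U ! l) (U ! i)) = (\<Sum>l<length U. cip n v (U ! l) * (if l = i then 1 else 0))"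
    by (rule sum.cong) (simp_all add: d)
  also have "\<dots> = cip n v (U ! i)" by (rule sum_delta_mult[OF assms(2)])
  finally have "(\<Sum>l<length U. cip n v (U ! l) * cip n (U ! l) (U ! i)) = cip n v (U ! i)" .
  then show ?thesis by (simp add: cip_resid)
qed

lemma cip_nrm: "cip n (nrm n r) u = cip n r u / complex_of_real (sqrt (Re (cip n r r)))"
  unfolding cip_def nrm_def by (simp add: sum_divide_distrib)

lemma resid_carrier[simp]: "resid n U v \<in> carrier_vec n"
  by (simp add: resid_def)

lemma nrm_carrier[simp]: "nrm n U \<in> carrier_vec n"
  by (simp add: nrm_def)

lemma cip_self_pos:
  assumes "r \<in> carrier_vec n" "r \<noteq> 0\<^sub>v n"
  shows "Re (cip n r r) > 0" and "cip n r r = complex_of_real (Re (cip n r r))"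
proof -
  have "cip n r r \<noteq> 0" using cip_zero_iff[OF assms(1)] assms(2) by simp
  moreover have "Re (cip n r r) \<ge> 0" by (simp add: cip_self_Re sum_nonneg)
  moreover have "Im (cip n r r) = 0" by (simp add: cip_self)
  ultimately show "Re (cip n r r) > 0" "cip n r r = complex_of_real (Re (cip n r r))"
    by (auto simp: complex_eq_iff)
qed

lemma cip_nrm_self:
  assumes "r \<in> carrier_vec n" "r \<noteq> 0\<^sub>v n"
  shows "cip n (nrm n r) (nrm n r) = 1"
proof -
  let ?c = "sqrt (Re (cip n r r))"
  have pos: "Re (cip n r r) > 0" and eq: "cip n r r = complex_of_real (Re (cip n r r))"
    using cip_self_pos[OF assms] by auto
  have "cip n (nrm n r) (nrm n r) = cnj (cip n (nrm n r) r) / complex_of_real ?c"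
    by (subst cip_sym, subst cip_nrm) simp
  also have "\<dots> = cip n r r / (complex_of_real ?c * complex_of_real ?c)"
    by (subst cip_sym[of n r], subst cip_nrm) simp
  also have "\<dots> = 1"
    using pos by (subst eq) (simp del: of_real_mult add: of_real_mult[symmetric])
  finally show ?thesis .
qed

lemma onl_snoc:
  assumes U: "onl n U" and e: "e \<in> carrier_vec n" and ee: "cip n e e = 1"
    and eU: "\<And>i. i < length U \<Longrightarrow> cip n e (U ! i) = 0"
  shows "onl n (U @ [e])"
proof -
  have Ue: "cip n (U ! i) e = 0" if "i < length U" for i
    using eU[OF that] by (subst cip_sym) simp
  have c1: "(U @ [e]) ! i \<in> carrier_vec n" if "i < length (U @ [e])" for i
  proof (cases "i < length U")
    case True then show ?thesis using U unfolding onl_def by (simp add: nth_append)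
  next
    case False then have "i = length U" using that by simp
    then show ?thesis using e by simp
  qed
  have c2: "cip n ((U @ [e]) ! i) ((U @ [e]) ! j) = (if i = j then 1 else 0)"
    if i: "i < length (U @ [e])" and j: "j < length (U @ [e])" for i j
  proof (cases "i < length U")
    case True
    show ?thesis
    proof (cases "j < length U")
      case True2: True
      then show ?thesis using True U unfolding onl_def by (simp add: nth_append)
    next
      case False
      then have "j = length U" using j by simp
      then show ?thesis using True Ue by (simp add: nth_append)
    qed
  next
    case False
    then have ie: "i = length U" using i by simp
    show ?thesis
    proof (cases "j < length U")
      case True
      then show ?thesis using ie eU by (simp add: nth_append)
    next
      case False2: False
      then have "j = length U" using j by simp
      then show ?thesis using ie ee by simp
    qed
  qed
  show ?thesis unfolding onl_def using c1 c2 by blast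
qed

lemma onl_step:
  assumes U: "onl n U"
  shows "onl n (step n U v)"
proof (cases "resid n U v = 0\<^sub>v n")
  case True then show ?thesis using U by (simp add: step_def)
next
  case False
  let ?e = "nrm n (resid n U v)"
  have ee: "cip n ?e ?e = 1" by (rule cip_nrm_self[OF resid_carrier False])
  have eU: "cip n ?e (U ! i) = 0" if "i < length U" for i
    using cip_resid_U[OF U that] by (simp add: cip_nrm)
  have "onl n (U @ [?e])" by (rule onl_snoc[OF U nrm_carrier ee eU])
  then show ?thesis using False by (simp add: step_def)
qed

lemma length_step: "length (step n U v) = (if resid n U v = 0\<^sub>v n then length U else Suc (length U))"
  by (simp add: step_def)

lemma orth_step:
  assumes "\<And>i. i < length U \<Longrightarrow> cip n (U ! i) u = 0" and "cip n v u = 0" and "i < length (step n U v)"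
  shows "cip n (step n U v ! i) u = 0"
proof (cases "resid n U v = 0\<^sub>v n")
  case True then show ?thesis using assms by (simp add: step_def)
next
  case False
  have "cip n (resid n U v) u = 0" using assms(1,2) by (simp add: cip_resid)
  then have "cip n (nrm n (resid n U v)) u = 0" by (simp add: cip_nrm)
  moreover have "i < Suc (length U)" using assms(3) False by (simp add: step_def)
  ultimately show ?thesis using False assms(1)
    by (cases "i < length U") (simp_all add: step_def nth_append)
qed

lemma proc_onl: "onl n U \<Longrightarrow> onl n (proc n V U om m)"
  by (induct m arbitrary: U) (auto intro: onl_step)

lemma proc_length: "length U \<le> length (proc n V U om m)"
proof (induct m arbitrary: U)
  case 0 then show ?case by simp
next
  case (Suc m)
  have "length U \<le> length (step n U (V (om m)))" by (simp add: length_step)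
  also have "\<dots> \<le> length (proc n V (step n U (V (om m))) om m)" by (rule Suc)
  finally show ?case by simp
qed

lemma proc_orth:
  "(\<And>i. i < length U \<Longrightarrow> cip n (U ! i) u = 0) \<Longrightarrow> (\<And>t. t < m \<Longrightarrow> cip n (V (om t)) u = 0)
   \<Longrightarrow> i < length (proc n V U om m) \<Longrightarrow> cip n (proc n V U om m ! i) u = 0"
proof (induct m arbitrary: U i)
  case 0 then show ?case by simp
next
  case (Suc m)
  have "cip n (step n U (V (om m)) ! j) u = 0" if "j < length (step n U (V (om m)))" for j
    by (rule orth_step) (use Suc.prems that in auto)
  then show ?case using Suc by simp
qed

lemma proc_cong: "(\<And>t. t < m \<Longrightarrow> om t = om' t) \<Longrightarrow> proc n V U om m = proc n V U om' m"
  by (induct m arbitrary: U) auto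

lemma onl_span:
  assumes U: "onl n U" and len: "length U \<ge> n" and u: "u \<in> carrier_vec n"
    and orth: "\<And>i. i < length U \<Longrightarrow> cip n (U ! i) u = 0"
  shows "u = 0\<^sub>v n"
proof -
  define M where "M = mat n n (\<lambda>(k, i). U ! i $ k)"
  define A where "A = mat n n (\<lambda>(i, k). cnj (U ! i $ k))"
  have M: "M \<in> carrier_mat n n" and A: "A \<in> carrier_mat n n" by (auto simp: M_def A_def)
  have "A * M = 1\<^sub>m n"
  proof (rule eq_matI)
    fix i j assume ij: "i < dim_row (1\<^sub>m n)" "j < dim_col (1\<^sub>m n)"
    then have "(A * M) $$ (i, j) = cip n (U ! j) (U ! i)"
      by (simp add: A_def M_def scalar_prod_def cip_def mult.commute atLeast0LessThan)
    also have "\<dots> = (if j = i then 1 else 0)" using U ij len unfolding onl_def by auto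
    finally show "(A * M) $$ (i, j) = 1\<^sub>m n $$ (i, j)" using ij by auto
  qed (auto simp: A_def M_def)
  then have MA: "M * A = 1\<^sub>m n" by (rule mat_mult_left_right_inverse[OF A M])
  have Au: "A *\<^sub>v u = 0\<^sub>v n"
  proof (rule eq_vecI)
    fix i assume i: "i < dim_vec (0\<^sub>v n)"
    then have "(A *\<^sub>v u) $ i = cip n u (U ! i)"
      using u by (simp add: A_def scalar_prod_def cip_def mult.commute atLeast0LessThan)
    also have "\<dots> = 0" using orth[of i] i len by (subst cip_sym) simp
    finally show "(A *\<^sub>v u) $ i = 0\<^sub>v n $ i" using i by simp
  qed (simp add: A_def)
  have "u = (M * A) *\<^sub>v u" using u by (simp add: MA)
  also have "\<dots> = M *\<^sub>v (A *\<^sub>v u)" using M A u by (simp add: assoc_mult_mat_vec)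
  also have "\<dots> = 0\<^sub>v n" unfolding Au using M by (intro eq_vecI) auto
  finally show ?thesis .
qed

context setting begin

lemma q_bound:
  assumes U: "onl n U" and F: "finite F" and Z: "\<And>j. j \<in> F \<Longrightarrow> resid n U (vv j) = 0\<^sub>v n"
  shows "(\<Sum>j\<in>F. p j) \<le> real (length U) / real n"
proof -
  let ?d = "length U"
  have pj: "p j = (\<Sum>l<?d. (cmod (ci (vv j) (U ! l)))\<^sup>2) / real n" if j: "j \<in> F" for j
  proof -
    have lc: "vv j $ k = (\<Sum>l<?d. ci (vv j) (U ! l) * U ! l $ k)" if "k < n" for k
    proof -
      have "resid n U (vv j) $ k = 0" using Z[OF j] that by simp
      then show ?thesis using that unfolding resid_def by simp
    qed
    have "ci (vv j) (vv j) = (\<Sum>l<?d. ci (vv j) (U ! l) * ci (U ! l) (vv j))"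
      by (rule cip_lincomb[OF lc])
    also have "\<dots> = (\<Sum>l<?d. complex_of_real ((cmod (ci (vv j) (U ! l)))\<^sup>2))"
      by (subst (2) cip_sym) (simp add: complex_mult_cnj cmod_power2 del: of_real_power)
    finally show ?thesis by (simp add: p_alt)
  qed
  have "(\<Sum>j\<in>F. p j) = (\<Sum>l<?d. \<Sum>j\<in>F. (cmod (ci (vv j) (U ! l)))\<^sup>2) / real n"
    by (simp add: pj sum_divide_distrib[symmetric] sum.swap[of _ F])
  also have "\<dots> \<le> (\<Sum>l<?d. Re (ci (U ! l) (U ! l))) / real n"
    using n_pos by (intro divide_right_mono sum_mono frame_bessel F) auto
  also have "\<dots> = real ?d / real n"
    using U unfolding onl_def by simp
  finally show ?thesis .
qed

end

context setting begin

abbreviation "Sh m om \<equiv> Sigma_hat ip s w n p m om"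

lemma Sh_carrier[simp]: "Sh m om \<in> carrier_mat n n"
  by (simp add: Sigma_hat_def)

lemma ip_w_s: "ip (w l) (s j) = cnj (vv j $ l)" if "l < n"
  using that by (subst ip_sym) simp

lemma Sh_entry:
  assumes "k < n" "l < n"
  shows "Sh m om $$ (k, l) = (\<Sum>t<m. vv (om t) $ k * cnj (vv (om t) $ l) / complex_of_real (p (om t))) / of_nat m"
  using assms by (simp add: Sigma_hat_def ip_w_s)

lemma cnj_ci: "cnj (ci v z) = (\<Sum>l<n. cnj (v $ l) * z $ l)"
  by (simp add: cip_def)

lemma mat_vec_idx:
  assumes "A \<in> carrier_mat n n" "z \<in> carrier_vec n" "k < n"
  shows "(A *\<^sub>v z) $ k = (\<Sum>l<n. A $$ (k, l) * z $ l)"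
  using assms by (auto simp: scalar_prod_def atLeast0LessThan intro!: sum.cong)

lemma Sh_mult:
  assumes z: "z \<in> carrier_vec n"
  shows "Sh m om *\<^sub>v z = vec n (\<lambda>k. (\<Sum>t<m. vv (om t) $ k * cnj (ci (vv (om t)) z) / complex_of_real (p (om t))) / of_nat m)"
proof (rule eq_vecI)
  fix k assume "k < dim_vec (vec n (\<lambda>k. (\<Sum>t<m. vv (om t) $ k * cnj (ci (vv (om t)) z) / complex_of_real (p (om t))) / of_nat m))"
  then have k: "k < n" by simp
  have "(Sh m om *\<^sub>v z) $ k = (\<Sum>l<n. Sh m om $$ (k, l) * z $ l)"
    by (rule mat_vec_idx[OF Sh_carrier z k])
  also have "\<dots> = (\<Sum>l<n. ((\<Sum>t<m. vv (om t) $ k * cnj (vv (om t) $ l) / complex_of_real (p (om t))) / of_nat m) * z $ l)"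
    by (rule sum.cong) (simp_all add: Sh_entry k)
  also have "\<dots> = (\<Sum>l<n. \<Sum>t<m. (vv (om t) $ k / complex_of_real (p (om t)) / of_nat m) * (cnj (vv (om t) $ l) * z $ l))"
    by (simp add: sum_divide_distrib sum_distrib_right sum_distrib_left mult_ac)
  also have "\<dots> = (\<Sum>t<m. \<Sum>l<n. (vv (om t) $ k / complex_of_real (p (om t)) / of_nat m) * (cnj (vv (om t) $ l) * z $ l))"
    by (rule sum.swap)
  also have "\<dots> = (\<Sum>t<m. (vv (om t) $ k / complex_of_real (p (om t)) / of_nat m) * cnj (ci (vv (om t)) z))"
    by (simp add: cnj_ci sum_distrib_left)
  also have "\<dots> = (\<Sum>t<m. vv (om t) $ k * cnj (ci (vv (om t)) z) / complex_of_real (p (om t))) / of_nat m"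
    by (simp add: sum_divide_distrib)
  finally show "(Sh m om *\<^sub>v z) $ k = vec n (\<lambda>k. (\<Sum>t<m. vv (om t) $ k * cnj (ci (vv (om t)) z) / complex_of_real (p (om t))) / of_nat m) $ k"
    using k by simp
qed (simp add: Sigma_hat_def)

lemma Sh_quad:
  assumes z: "z \<in> carrier_vec n"
  shows "ci (Sh m om *\<^sub>v z) z = complex_of_real ((\<Sum>t<m. (cmod (ci (vv (om t)) z))\<^sup>2 / p (om t)) / real m)"
proof -
  have "ci (Sh m om *\<^sub>v z) z = (\<Sum>k<n. ((\<Sum>t<m. vv (om t) $ k * cnj (ci (vv (om t)) z) / complex_of_real (p (om t))) / of_nat m) * cnj (z $ k))"
    unfolding cip_def Sh_mult[OF z] by (rule sum.cong) simp_all
  also have "\<dots> = (\<Sum>k<n. \<Sum>t<m. (cnj (ci (vv (om t)) z) / complex_of_real (p (om t)) / of_nat m) * (vv (om t) $ k * cnj (z $ k)))"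
    by (simp add: sum_divide_distrib sum_distrib_right sum_distrib_left mult_ac)
  also have "\<dots> = (\<Sum>t<m. \<Sum>k<n. (cnj (ci (vv (om t)) z) / complex_of_real (p (om t)) / of_nat m) * (vv (om t) $ k * cnj (z $ k)))"
    by (rule sum.swap)
  also have "\<dots> = (\<Sum>t<m. (cnj (ci (vv (om t)) z) / complex_of_real (p (om t)) / of_nat m) * ci (vv (om t)) z)"
    by (simp add: cip_def sum_distrib_left)
  also have "\<dots> = (\<Sum>t<m. complex_of_real ((cmod (ci (vv (om t)) z))\<^sup>2 / p (om t) / real m))"
  proof (rule sum.cong)
    fix t
    have "cnj (ci (vv (om t)) z) * ci (vv (om t)) z = complex_of_real ((cmod (ci (vv (om t)) z))\<^sup>2)"
      by (simp add: complex_mult_cnj cmod_power2 mult.commute del: of_real_power)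
    then show "(cnj (ci (vv (om t)) z) / complex_of_real (p (om t)) / of_nat m) * ci (vv (om t)) z
        = complex_of_real ((cmod (ci (vv (om t)) z))\<^sup>2 / p (om t) / real m)"
      by (simp add: field_simps del: of_real_power)
  qed simp
  also have "\<dots> = complex_of_real ((\<Sum>t<m. (cmod (ci (vv (om t)) z))\<^sup>2 / p (om t)) / real m)"
    by (simp add: sum_divide_distrib del: of_real_power)
  finally show ?thesis .
qed

lemma Sh_kernel:
  assumes z: "z \<in> carrier_vec n" and m: "m > 0" and Z: "Sh m om *\<^sub>v z = 0\<^sub>v n"
  shows "\<And>t. t < m \<Longrightarrow> ci (vv (om t)) z = 0"
proof -
  have "ci (Sh m om *\<^sub>v z) z = 0" unfolding Z by (simp add: cip_def)
  then have "(\<Sum>t<m. (cmod (ci (vv (om t)) z))\<^sup>2 / p (om t)) / real m = 0"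
    unfolding Sh_quad[OF z] by (simp only: of_real_eq_0_iff)
  then have "(\<Sum>t<m. (cmod (ci (vv (om t)) z))\<^sup>2 / p (om t)) = 0" using m by simp
  then have all0: "\<forall>t\<in>{..<m}. (cmod (ci (vv (om t)) z))\<^sup>2 / p (om t) = 0"
    by (subst sum_nonneg_eq_0_iff[symmetric]) (auto intro: divide_nonneg_nonneg p_nonneg)
  fix t assume t: "t < m"
  show "ci (vv (om t)) z = 0"
  proof (cases "p (om t) = 0")
    case True
    then have "vv (om t) = 0\<^sub>v n" by (rule p_zero)
    then show ?thesis by (simp add: cip_def)
  next
    case False
    then show ?thesis using all0 t by fastforce
  qed
qed

definition good :: "nat \<Rightarrow> (nat \<Rightarrow> nat) \<Rightarrow> bool" where
  "good m om \<longleftrightarrow> (\<forall>z\<in>carrier_vec n. (\<forall>t<m. ci (vv (om t)) z = 0) \<longrightarrow> z = 0\<^sub>v n)"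

lemma good_det:
  assumes g: "good m om" and m: "m > 0"
  shows "det (Sh m om) \<noteq> 0"
proof
  assume "det (Sh m om) = 0"
  then obtain z where z: "z \<in> carrier_vec n" "z \<noteq> 0\<^sub>v n" "Sh m om *\<^sub>v z = 0\<^sub>v n"
    using det_0_iff_vec_prod_zero[OF Sh_carrier] by blast
  have "\<forall>t<m. ci (vv (om t)) z = 0" using Sh_kernel[OF z(1) m z(3)] by blast
  then show False using g z unfolding good_def by blast
qed

lemma good_inv:
  assumes g: "good m om" and m: "m > 0"
  obtains B where "B \<in> carrier_mat n n" "Sh m om * B = 1\<^sub>m n" "B * Sh m om = 1\<^sub>m n"
proof -
  have "Sh m om \<in> Units (ring_mat TYPE(complex) n ())"
    by (rule det_non_zero_imp_unit[OF Sh_carrier good_det[OF g m]])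
  then obtain B where "B \<in> carrier_mat n n" "B * Sh m om = 1\<^sub>m n" "Sh m om * B = 1\<^sub>m n"
    unfolding Units_def by (auto simp: ring_mat_def)
  then show ?thesis using that by blast
qed

lemma good_invertible:
  assumes g: "good m om" and m: "m > 0"
  shows "invertible_mat (Sh m om)"
proof -
  obtain B where B: "B \<in> carrier_mat n n" "Sh m om * B = 1\<^sub>m n" "B * Sh m om = 1\<^sub>m n"
    using good_inv[OF g m] by blast
  then show ?thesis unfolding invertible_mat_def inverts_mat_def square_mat.simps
    using Sh_carrier[of m om] by (metis carrier_matD(1) carrier_matD(2))
qed

end

lemma bl_cmul: "bounded_linear f \<Longrightarrow> bounded_linear (\<lambda>g. (c::complex) * f g)"
  using bounded_linear_compose[OF bounded_linear_mult_right] by blast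

lemma bl_mulc: "bounded_linear f \<Longrightarrow> bounded_linear (\<lambda>g. f g * (c::complex))"
  using bounded_linear_compose[OF bounded_linear_mult_left] by blast

lemma bl_divc: "bounded_linear f \<Longrightarrow> bounded_linear (\<lambda>g. f g / (c::complex))"
  using bounded_linear_compose[OF bounded_linear_divide] by blast

context setting begin

abbreviation "Pr \<equiv> oproj ip (orth ip (lspan sc (w ` {..<n})))"

definition cf :: "'a \<Rightarrow> complex vec" where "cf g = vec n (\<lambda>k. ip g (w k))"

lemma cf_carrier[simp]: "cf g \<in> carrier_vec n" by (simp add: cf_def)

lemma ip_synth_left: "ip (synth c) z = (\<Sum>k<n. c $ k * ip (w k) z)"
  by (simp add: synth_n_def ip_sum ip_sc)

lemma ip_synth_right: "ip z (synth c) = (\<Sum>k<n. cnj (c $ k) * ip z (w k))"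
  by (simp add: synth_n_def ip_sum_right ip_sc_right)

lemma ip_synth_w: "k < n \<Longrightarrow> ip (synth c) (w k) = c $ k"
  unfolding synth_n_def by (simp add: on_sum_ip[OF onw])

lemma w_lspan: "k < n \<Longrightarrow> w k \<in> lspan sc (w ` {..<n})"
  unfolding lspan_def
  by (rule CollectI, rule exI[of _ "{w k}"], rule exI[of _ "\<lambda>_. 1"]) (simp add: sc_one)

lemma P_formula: "Pr g = g - synth (cf g)"
proof -
  let ?M = "orth ip (lspan sc (w ` {..<n}))"
  let ?y = "g - synth (cf g)"
  have yw: "ip ?y (w k) = 0" if "k < n" for k
    using that by (simp add: ip_diff ip_synth_w cf_def)
  have yM: "?y \<in> ?M"
    unfolding orth_def
  proof (rule CollectI, rule ballI)
    fix z assume "z \<in> lspan sc (w ` {..<n})"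
    then obtain F c where F: "finite F" "F \<subseteq> w ` {..<n}" and z: "z = (\<Sum>a\<in>F. sc (c a) a)"
      unfolding lspan_def by (simp only: mem_Collect_eq) (elim exE conjE)
    have "ip ?y z = (\<Sum>a\<in>F. cnj (c a) * ip ?y a)"
      unfolding z by (simp add: ip_sum_right ip_sc_right)
    also have "\<dots> = 0"
      by (rule sum.neutral) (use F(2) yw in auto)
    finally show "ip ?y z = 0" .
  qed
  have orthM: "ip (g - ?y) z = 0" if z: "z \<in> ?M" for z
  proof -
    have "ip z (w k) = 0" if "k < n" for k
      using z w_lspan[OF that] unfolding orth_def by blast
    then have "ip (w k) z = 0" if "k < n" for k
      using that by (subst ip_sym) simp
    then show ?thesis by (simp add: ip_synth_left)
  qed
  show ?thesis
    unfolding oproj_def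
  proof (rule the_equality)
    show "?y \<in> ?M \<and> (\<forall>z\<in>?M. ip (g - ?y) z = 0)" using yM orthM by blast
  next
    fix y1 assume y1: "y1 \<in> ?M \<and> (\<forall>z\<in>?M. ip (g - y1) z = 0)"
    have dM: "y1 - ?y \<in> ?M"
      using y1 yM unfolding orth_def by (simp add: ip_diff)
    have "ip (g - y1) (y1 - ?y) = 0" using y1 dM by blast
    moreover have "ip (g - ?y) (y1 - ?y) = 0" using orthM dM by blast
    ultimately have "ip (y1 - ?y) (y1 - ?y) = 0"
      by (metis (no_types, lifting) diff_diff_eq2 diff_self ip_diff add_diff_cancel_left'
          diff_add_cancel ip_minus minus_diff_eq neg_equal_0_iff_equal)
    then show "y1 = ?y" using ip_self_eq0 by simp
  qed
qed

lemma ip_P_w: "k < n \<Longrightarrow> ip (Pr g) (w k) = 0"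
  by (simp add: P_formula ip_diff ip_synth_w cf_def)

lemma synth_zero: "synth (0\<^sub>v n) = 0"
  by (simp add: synth_n_def)

lemma P_idem: "Pr (Pr g) = Pr g"
proof -
  have "cf (Pr g) = 0\<^sub>v n" by (rule eq_vecI) (simp_all add: cf_def ip_P_w)
  then show ?thesis by (subst P_formula) (simp add: synth_zero)
qed

lemma ip_P_synth: "ip (Pr g) (synth d) = 0"
  by (simp add: ip_synth_right ip_P_w)

lemma synth_add: "x \<in> carrier_vec n \<Longrightarrow> y \<in> carrier_vec n \<Longrightarrow> synth (x + y) = synth x + synth y"
  by (simp add: synth_n_def sc_addl sum.distrib)

lemma ci_minus: "x \<in> carrier_vec n \<Longrightarrow> y \<in> carrier_vec n \<Longrightarrow> ci v (x - y) = ci v x - ci v y"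
  unfolding cip_def by (simp add: sum_subtractf[symmetric] right_diff_distrib)

lemma ci_zero_right: "ci v (0\<^sub>v n) = 0"
  by (simp add: cip_def)

lemma sum_zero_ci:
  fixes m :: nat and om :: "nat \<Rightarrow> nat"
  assumes "(\<Sum>t<m. (cmod (ci (vv (om t)) z))\<^sup>2 / p (om t)) = 0" and t: "t < m"
  shows "ci (vv (om t)) z = 0"
proof -
  have all0: "\<forall>t\<in>{..<m}. (cmod (ci (vv (om t)) z))\<^sup>2 / p (om t) = 0"
    using assms(1) sum_nonneg_eq_0_iff[OF finite_lessThan[of m], of "\<lambda>t. (cmod (ci (vv (om t)) z))\<^sup>2 / p (om t)"]
    by (simp add: p_nonneg)
  show ?thesis
  proof (cases "p (om t) = 0")
    case True
    then have "vv (om t) = 0\<^sub>v n" by (rule p_zero)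
    then show ?thesis by (simp add: cip_def)
  next
    case False
    then show ?thesis using all0 t by fastforce
  qed
qed

end

lemma cmod_add_sq: "(cmod (a + e))\<^sup>2 = (cmod a)\<^sup>2 + (cmod e)\<^sup>2 + 2 * Re (a * cnj e)"
  unfolding cmod_power2 by (simp add: power2_eq_square algebra_simps)

context setting begin

abbreviation "Gm m om g \<equiv> Gamma_hat sc ip s w n p m om g"

lemma Gm_carrier[simp]: "Gm m om g \<in> carrier_vec n"
  by (simp add: Gamma_hat_def)

lemma Gm_P: "Gm m om (Pr g) = Gm m om g"
  by (simp add: Gamma_hat_def P_idem)

lemma ip_P_expand: "ip (Pr g) z = ip g z - (\<Sum>k<n. ip g (w k) * ip (w k) z)"
  by (simp add: P_formula ip_diff ip_synth_left cf_def)

lemma bl_T: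
  fixes m :: nat and om :: "nat \<Rightarrow> nat"
  assumes B: "B \<in> carrier_mat n n"
  shows "bounded_linear (\<lambda>g. synth (B *\<^sub>v Gm m om g))"
proof -
  define \<phi> where "\<phi> k g = (\<Sum>l<n. B $$ (k, l) * ((\<Sum>t<m. (ip g (s (om t)) - (\<Sum>k'<n. ip g (w k') * ip (w k') (s (om t))))
        * ip (s (om t)) (w l) / complex_of_real (p (om t))) / of_nat m))" for k g
  have bl: "bounded_linear (\<phi> k)" for k
    unfolding \<phi>_def
    by (intro bounded_linear_sum bl_cmul bl_divc bl_mulc bounded_linear_sub bounded_linear_ip)
  have eq: "(B *\<^sub>v Gm m om g) $ k = \<phi> k g" if k: "k < n" for k g
  proof -
    have "(B *\<^sub>v Gm m om g) $ k = (\<Sum>l<n. B $$ (k, l) * Gm m om g $ l)"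
      by (rule mat_vec_idx[OF B Gm_carrier k])
    also have "\<dots> = \<phi> k g"
      unfolding \<phi>_def by (rule sum.cong) (simp_all add: Gamma_hat_def ip_P_expand)
    finally show ?thesis .
  qed
  have "(\<lambda>g. synth (B *\<^sub>v Gm m om g)) = (\<lambda>g. \<Sum>k<n. sc (\<phi> k g) (w k))"
    by (rule ext) (simp add: synth_n_def eq)
  moreover have "bounded_linear (\<lambda>g. \<Sum>k<n. sc (\<phi> k g) (w k))"
    by (intro bounded_linear_sum bounded_linear_sc bl)
  ultimately show ?thesis by simp
qed

lemma wls_main:
  fixes m :: nat and om :: "nat \<Rightarrow> nat"
  assumes m: "m > 0" and g: "good m om"
  shows "\<exists>x\<in>carrier_vec n.
     (\<forall>y\<in>carrier_vec n. wls_obj sc ip s w n p m om f x \<le> wls_obj sc ip s w n p m om f y) \<and>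
     (\<forall>y\<in>carrier_vec n. wls_obj sc ip s w n p m om f y \<le> wls_obj sc ip s w n p m om f x \<longrightarrow> y = x) \<and>
     (\<forall>B\<in>carrier_mat n n. inverts_mat (Sh m om) B \<longrightarrow>
        norm (f - synth x) \<le> norm (Pr f) * sqrt (1 + (onorm (\<lambda>g. synth (B *\<^sub>v Gm m om g)))\<^sup>2))"
proof -
  obtain B0 where B0: "B0 \<in> carrier_mat n n" "Sh m om * B0 = 1\<^sub>m n" "B0 * Sh m om = 1\<^sub>m n"
    using good_inv[OF g m] by blast
  define x0 where "x0 = cf f + B0 *\<^sub>v Gm m om f"
  have x0c: "x0 \<in> carrier_vec n" using B0(1) by (simp add: x0_def)
  define b where "b t = ip f (s (om t))" for t
  let ?F = "wls_obj sc ip s w n p m om f"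
  \<comment> \<open>normal equations\<close>
  have Sx0: "Sh m om *\<^sub>v x0 = Sh m om *\<^sub>v cf f + Gm m om f"
  proof -
    have "Sh m om *\<^sub>v x0 = Sh m om *\<^sub>v cf f + Sh m om *\<^sub>v (B0 *\<^sub>v Gm m om f)"
      unfolding x0_def using B0(1) by (simp add: mult_add_distrib_mat_vec[OF Sh_carrier])
    also have "Sh m om *\<^sub>v (B0 *\<^sub>v Gm m om f) = (Sh m om * B0) *\<^sub>v Gm m om f"
      using B0(1) by (simp add: assoc_mult_mat_vec[OF Sh_carrier B0(1) Gm_carrier])
    also have "\<dots> = Gm m om f" using B0(2) by simp
    finally show ?thesis .
  qed
  have e2: "(Sh m om *\<^sub>v z) $ k * of_nat m = (\<Sum>t<m. vv (om t) $ k * cnj (ci (vv (om t)) z) / complex_of_real (p (om t)))"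
    if "z \<in> carrier_vec n" "k < n" for z k
    using that m by (simp add: Sh_mult)
  have e3: "Gm m om f $ k * of_nat m = (\<Sum>t<m. vv (om t) $ k * ip (Pr f) (s (om t)) / complex_of_real (p (om t)))"
    if "k < n" for k
    using that m by (simp add: Gamma_hat_def mult.commute)
  have e4: "b t = cnj (ci (vv (om t)) (cf f)) + ip (Pr f) (s (om t))" for t
    unfolding b_def by (simp add: P_formula ip_diff synth_ip)
  have N: "(\<Sum>t<m. vv (om t) $ k * (cnj (ci (vv (om t)) x0) - b t) / complex_of_real (p (om t))) = 0"
    if k: "k < n" for k
  proof -
    have "(\<Sum>t<m. vv (om t) $ k * (cnj (ci (vv (om t)) x0) - b t) / complex_of_real (p (om t)))
        = (\<Sum>t<m. vv (om t) $ k * cnj (ci (vv (om t)) x0) / complex_of_real (p (om t)))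
          - (\<Sum>t<m. vv (om t) $ k * cnj (ci (vv (om t)) (cf f)) / complex_of_real (p (om t)))
          - (\<Sum>t<m. vv (om t) $ k * ip (Pr f) (s (om t)) / complex_of_real (p (om t)))"
      by (simp add: e4 sum_subtractf[symmetric] diff_divide_distrib right_diff_distrib distrib_left add_divide_distrib diff_diff_eq)
    also have "\<dots> = (Sh m om *\<^sub>v x0) $ k * of_nat m - (Sh m om *\<^sub>v cf f) $ k * of_nat m - Gm m om f $ k * of_nat m"
      by (simp add: e2[OF x0c k] e2[OF cf_carrier k] e3[OF k])
    also have "\<dots> = 0"
    proof -
      have "(Sh m om *\<^sub>v cf f + Gm m om f) $ k = (Sh m om *\<^sub>v cf f) $ k + Gm m om f $ k"
        by (rule index_add_vec(1)) (simp add: Gamma_hat_def k)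
      then show ?thesis by (simp add: Sx0 algebra_simps)
    qed
    finally show ?thesis .
  qed
  have Fexp: "?F y = ?F x0 + (\<Sum>t<m. (cmod (ci (vv (om t)) (y - x0)))\<^sup>2 / p (om t))"
    if y: "y \<in> carrier_vec n" for y
  proof -
    define z where "z = y - x0"
    have zc: "z \<in> carrier_vec n" using y x0c by (simp add: z_def)
    define a where "a t = cnj (ci (vv (om t)) x0) - b t" for t
    define e where "e t = cnj (ci (vv (om t)) z)" for t
    have yt: "ip (synth y) (s (om t)) - ip f (s (om t)) = a t + e t" for t
      using ci_minus[OF y x0c, of "vv (om t)"] unfolding a_def e_def z_def b_def
      by (simp add: synth_ip)
    have x0t: "ip (synth x0) (s (om t)) - ip f (s (om t)) = a t" for t
      unfolding a_def b_def by (simp add: synth_ip)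
    have cross: "(\<Sum>t<m. a t * cnj (e t) / complex_of_real (p (om t))) = 0"
    proof -
      have "(\<Sum>t<m. a t * cnj (e t) / complex_of_real (p (om t)))
          = (\<Sum>t<m. \<Sum>k<n. cnj (z $ k) * (vv (om t) $ k * a t / complex_of_real (p (om t))))"
        unfolding e_def by (simp add: cip_def sum_distrib_left sum_divide_distrib mult_ac)
      also have "\<dots> = (\<Sum>k<n. cnj (z $ k) * (\<Sum>t<m. vv (om t) $ k * a t / complex_of_real (p (om t))))"
        by (subst sum.swap) (simp add: sum_distrib_left)
      also have "\<dots> = 0"
      proof (rule sum.neutral, rule ballI)
        fix k assume "k \<in> {..<n}"
        then have "(\<Sum>t<m. vv (om t) $ k * a t / complex_of_real (p (om t))) = 0"
          unfolding a_def by (intro N) simp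
        then show "cnj (z $ k) * (\<Sum>t<m. vv (om t) $ k * a t / complex_of_real (p (om t))) = 0"
          by (simp only: mult_zero_right)
      qed
      finally show ?thesis .
    qed
    have "?F y = (\<Sum>t<m. (cmod (a t + e t))\<^sup>2 / p (om t))"
      by (simp add: wls_obj_def yt)
    also have "\<dots> = (\<Sum>t<m. (cmod (a t))\<^sup>2 / p (om t)) + (\<Sum>t<m. (cmod (e t))\<^sup>2 / p (om t))
        + 2 * Re (\<Sum>t<m. a t * cnj (e t) / complex_of_real (p (om t)))"
      by (simp add: cmod_add_sq add_divide_distrib sum.distrib Re_sum sum_distrib_left
          Re_divide_of_real)
    also have "\<dots> = ?F x0 + (\<Sum>t<m. (cmod (ci (vv (om t)) z))\<^sup>2 / p (om t))"
      unfolding cross by (simp add: wls_obj_def x0t e_def)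
    finally show ?thesis by (simp add: z_def)
  qed
  have minimal: "\<forall>y\<in>carrier_vec n. ?F x0 \<le> ?F y"
    using Fexp by (simp add: sum_nonneg p_nonneg)
  have unique: "\<forall>y\<in>carrier_vec n. ?F y \<le> ?F x0 \<longrightarrow> y = x0"
  proof (intro ballI impI)
    fix y assume y: "y \<in> carrier_vec n" and le: "?F y \<le> ?F x0"
    have "(\<Sum>t<m. (cmod (ci (vv (om t)) (y - x0)))\<^sup>2 / p (om t)) = 0"
      using Fexp[OF y] le sum_nonneg[of "{..<m}" "\<lambda>t. (cmod (ci (vv (om t)) (y - x0)))\<^sup>2 / p (om t)"]
      by (simp add: p_nonneg)
    then have "\<forall>t<m. ci (vv (om t)) (y - x0) = 0" using sum_zero_ci by blast
    then have "y - x0 = 0\<^sub>v n" using g y x0c unfolding good_def by simp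
    then show "y = x0" using y x0c
      by (metis carrier_vecD eq_vecI index_minus_vec(1) index_zero_vec(1) right_minus_eq)
  qed
  have bound: "norm (f - synth x0) \<le> norm (Pr f) * sqrt (1 + (onorm (\<lambda>g. synth (B *\<^sub>v Gm m om g)))\<^sup>2)"
    if B: "B \<in> carrier_mat n n" and inv: "inverts_mat (Sh m om) B" for B
  proof -
    have SB: "Sh m om * B = 1\<^sub>m n" using inv unfolding inverts_mat_def by (simp add: Sigma_hat_def)
    have "B0 = B0 * (Sh m om * B)" using B0(1) by (simp add: SB)
    also have "\<dots> = (B0 * Sh m om) * B" using assoc_mult_mat[OF B0(1) Sh_carrier B] by simp
    also have "\<dots> = B" using B by (simp add: B0(3))
    finally have BB: "B0 = B" .
    define T where "T g = synth (B *\<^sub>v Gm m om g)" for g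
    define K where "K = onorm T"
    have blT: "bounded_linear T" unfolding T_def by (rule bl_T[OF B])
    have Tf: "T f = T (Pr f)" unfolding T_def by (simp add: Gm_P)
    have diff: "f - synth x0 = Pr f - T f"
      unfolding x0_def T_def BB using B by (simp add: synth_add P_formula algebra_simps)
    have "(norm (f - synth x0))\<^sup>2 = (norm (Pr f))\<^sup>2 + (norm (T f))\<^sup>2"
      unfolding diff by (simp add: norm_diff_sq T_def ip_P_synth)
    also have "(norm (T f))\<^sup>2 \<le> (K * norm (Pr f))\<^sup>2"
      unfolding Tf K_def by (rule power_mono[OF onorm[OF blT] norm_ge_zero])
    finally have "(norm (f - synth x0))\<^sup>2 \<le> (norm (Pr f) * sqrt (1 + K\<^sup>2))\<^sup>2"
      by (simp add: power_mult_distrib algebra_simps)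
    then have "norm (f - synth x0) \<le> norm (Pr f) * sqrt (1 + K\<^sup>2)"
      by (rule power2_le_imp_le) simp
    then show ?thesis unfolding K_def T_def .
  qed
  show ?thesis using x0c minimal unique bound by blast
qed

end

context setting begin

lemma p_nn_integral: "(\<integral>\<^sup>+x. ennreal (p x) \<partial>count_space UNIV) = 1"
proof -
  have "p sums 1" by (rule has_sum_imp_sums[OF p_has_sum])
  then have "(\<lambda>i. ennreal (p i)) sums ennreal 1" by (subst sums_ennreal) (simp_all add: p_nonneg)
  then have "(\<Sum>i. ennreal (p i)) = 1" by (simp add: sums_unique[symmetric])
  then show ?thesis by (simp add: nn_integral_count_space_nat)
qed

definition P0 :: "nat pmf" where "P0 = embed_pmf p"

lemma pmf_P0: "pmf P0 j = p j"
  unfolding P0_def by (rule pmf_embed_pmf[OF p_nonneg p_nn_integral])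

abbreviation "Q m \<equiv> Pi_pmf {..<m} (0::nat) (\<lambda>_. P0)"

definition Bad :: "nat \<Rightarrow> complex vec list \<Rightarrow> (nat \<Rightarrow> nat) set" where
  "Bad m U = {om. length (proc n vv U om m) < n}"

lemma emeasure_Z:
  assumes U: "onl n U"
  shows "emeasure (measure_pmf P0) {y. resid n U (vv y) = 0\<^sub>v n} \<le> ennreal (real (length U) / real n)"
proof -
  let ?Z = "{y. resid n U (vv y) = 0\<^sub>v n}"
  have "emeasure (measure_pmf P0) ?Z = (\<integral>\<^sup>+x. indicator ?Z x \<partial>measure_pmf P0)"
    by simp
  also have "\<dots> = (\<integral>\<^sup>+x. ennreal (p x) * indicator ?Z x \<partial>count_space UNIV)"
    by (simp add: nn_integral_measure_pmf pmf_P0)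
  also have "\<dots> = (\<Sum>x. ennreal (p x) * indicator ?Z x)"
    by (rule nn_integral_count_space_nat)
  also have "\<dots> = (SUP N. \<Sum>x<N. ennreal (p x) * indicator ?Z x)"
    by (rule suminf_eq_SUP)
  also have "\<dots> \<le> ennreal (real (length U) / real n)"
  proof (rule SUP_least)
    fix N
    have "(\<Sum>x<N. ennreal (p x) * indicator ?Z x) = (\<Sum>x\<in>{..<N} \<inter> ?Z. ennreal (p x))"
      by (simp add: sum.inter_restrict[symmetric] indicator_def if_distrib cong: if_cong)
    also have "\<dots> = ennreal (\<Sum>x\<in>{..<N} \<inter> ?Z. p x)"
      by (rule sum_ennreal) (simp add: p_nonneg)
    also have "\<dots> \<le> ennreal (real (length U) / real n)"
      by (rule ennreal_leI, rule q_bound[OF U]) auto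
    finally show "(\<Sum>x<N. ennreal (p x) * indicator ?Z x) \<le> ennreal (real (length U) / real n)" .
  qed
  finally show ?thesis .
qed

lemma Q_Suc: "Q (Suc m) = bind_pmf P0 (\<lambda>y. map_pmf (\<lambda>f. f(m := y)) (Q m))"
  unfolding lessThan_Suc
  by (subst Pi_pmf_insert') (simp_all add: map_pmf_def)

lemma Bad_Suc: "(\<lambda>f. f(m := y)) -` Bad (Suc m) U = Bad m (step n U (vv y))"
proof -
  have "proc n vv U (f(m := y)) (Suc m) = proc n vv (step n U (vv y)) f m" for f
    by (simp add: proc_cong[of m "f(m := y)" f])
  then show ?thesis unfolding Bad_def by auto
qed

lemma prob_bad:
  assumes "onl n U"
  shows "emeasure (measure_pmf (Q m)) (Bad m U) \<le> ennreal (real (n - length U) * (1 - 1 / real n) ^ m)"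
  using assms
proof (induct m arbitrary: U)
  case 0
  show ?case
  proof (cases "length U < n")
    case True
    have "emeasure (measure_pmf (Q 0)) (Bad 0 U) \<le> 1" by (rule measure_pmf.emeasure_le_1)
    also have "\<dots> \<le> ennreal (real (n - length U) * (1 - 1 / real n) ^ 0)"
      using True by simp
    finally show ?thesis .
  next
    case False
    then have "Bad 0 U = {}" by (simp add: Bad_def)
    then show ?thesis by simp
  qed
next
  case (Suc m)
  let ?d = "length U"
  let ?r = "1 - 1 / real n"
  have r0: "?r \<ge> 0" using n_pos by simp
  show ?case
  proof (cases "?d < n")
    case False
    have "\<not> length (proc n vv U om (Suc m)) < n" for om
      using proc_length[where U=U and m="Suc m" and n=n and V=vv and om=om] False by linarith
    then have "Bad (Suc m) U = {}"
      unfolding Bad_def by blast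
    then show ?thesis by simp
  next
    case True
    let ?Z = "{y. resid n U (vv y) = 0\<^sub>v n}"
    let ?c = "real (n - ?d - 1) * ?r ^ m"
    have c0: "?c \<ge> 0" using r0 by simp
    have pt: "emeasure (measure_pmf (Q m)) (Bad m (step n U (vv y)))
        \<le> ennreal ?c + ennreal (?r ^ m) * indicator ?Z y" for y
    proof (cases "y \<in> ?Z")
      case True
      then have "step n U (vv y) = U" by (simp add: step_def)
      then have "emeasure (measure_pmf (Q m)) (Bad m (step n U (vv y))) \<le> ennreal (real (n - ?d) * ?r ^ m)"
        using Suc.hyps[OF Suc.prems] by simp
      also have "real (n - ?d) * ?r ^ m = ?c + ?r ^ m"
        using \<open>?d < n\<close> by (simp add: of_nat_diff algebra_simps)
      also have "ennreal (?c + ?r ^ m) = ennreal ?c + ennreal (?r ^ m)"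
        using c0 r0 by (simp add: ennreal_plus)
      finally show ?thesis using True by simp
    next
      case False
      then have len: "length (step n U (vv y)) = Suc ?d" by (simp add: length_step)
      have "emeasure (measure_pmf (Q m)) (Bad m (step n U (vv y))) \<le> ennreal (real (n - length (step n U (vv y))) * ?r ^ m)"
        by (rule Suc.hyps[OF onl_step[OF Suc.prems]])
      also have "\<dots> = ennreal ?c" by (simp add: len)
      finally show ?thesis using False by simp
    qed
    have "emeasure (measure_pmf (Q (Suc m))) (Bad (Suc m) U)
        = (\<integral>\<^sup>+y. emeasure (measure_pmf (Q m)) (Bad m (step n U (vv y))) \<partial>measure_pmf P0)"
      by (simp add: Q_Suc Bad_Suc)
    also have "\<dots> \<le> (\<integral>\<^sup>+y. ennreal ?c + ennreal (?r ^ m) * indicator ?Z y \<partial>measure_pmf P0)"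
      by (rule nn_integral_mono) (rule pt)
    also have "\<dots> = ennreal ?c + ennreal (?r ^ m) * emeasure (measure_pmf P0) ?Z"
      by (subst nn_integral_add) (simp_all add: nn_integral_cmult_indicator measure_pmf.emeasure_space_1)
    also have "\<dots> \<le> ennreal ?c + ennreal (?r ^ m) * ennreal (real ?d / real n)"
      by (intro add_left_mono mult_left_mono emeasure_Z[OF Suc.prems]) simp
    also have "\<dots> = ennreal (?c + ?r ^ m * (real ?d / real n))"
    proof -
      have a: "ennreal (?r ^ m * (real ?d / real n)) = ennreal (?r ^ m) * ennreal (real ?d / real n)"
        by (rule ennreal_mult) (rule zero_le_power[OF r0], simp)
      have b: "ennreal (?c + ?r ^ m * (real ?d / real n)) = ennreal ?c + ennreal (?r ^ m * (real ?d / real n))"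
        by (rule ennreal_plus) (rule c0, rule mult_nonneg_nonneg[OF zero_le_power[OF r0]], simp)
      show ?thesis by (simp only: a b)
    qed
    also have "?c + ?r ^ m * (real ?d / real n) = real (n - ?d) * ?r ^ Suc m"
    proof -
      have "real (n - ?d - 1) = real n - real ?d - 1" using True by (simp add: of_nat_diff)
      moreover have "real (n - ?d) = real n - real ?d" using True by (simp add: of_nat_diff)
      ultimately show ?thesis using n_pos by (simp add: field_simps)
    qed
    finally show ?thesis .
  qed
qed

end

theorem corollary3p9:
  fixes sc :: "complex \<Rightarrow> 'a::{real_normed_vector,complete_space} \<Rightarrow> 'a"
    and ip :: "'a \<Rightarrow> 'a \<Rightarrow> complex"
    and s w :: "nat \<Rightarrow> 'a" and n :: nat
  assumes H: "complex_hilbert sc ip" and sep: "separable_space TYPE('a)"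
    and n_pos: "n > 0"
    and WS: "cspan sc (range w) \<subseteq> cspan sc (range s)"
    and ons: "orthonormal_seq ip s" and onw: "orthonormal_seq ip w"
  defines "p \<equiv> pdist ip s w n"
    and "P \<equiv> oproj ip (orth ip (lspan sc (w ` {..<n})))"
  shows "(\<forall>j. p j \<ge> 0) \<and> (p has_sum 1) UNIV \<and>
    (bdd_above ((\<lambda>j. (norm (P (s j)))\<^sup>2 / p j) ` {j. p j > 0}) \<longrightarrow>
      (\<forall>f (\<delta>::real) (m::nat). 0 < \<delta> \<and> \<delta> < 1 \<and>
         real m \<ge> 8 / 3 * real n * ln (2 * real n / \<delta>) \<longrightarrow>
         measure_pmf.prob (Pi_pmf {..<m} 0 (\<lambda>_. embed_pmf p))
           {om. invertible_mat (Sigma_hat ip s w n p m om) \<and>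
                (\<exists>x\<in>carrier_vec n.
                   (\<forall>y\<in>carrier_vec n. wls_obj sc ip s w n p m om f x \<le> wls_obj sc ip s w n p m om f y) \<and>
                   (\<forall>y\<in>carrier_vec n. wls_obj sc ip s w n p m om f y \<le> wls_obj sc ip s w n p m om f x \<longrightarrow> y = x) \<and>
                   (\<forall>B\<in>carrier_mat n n. inverts_mat (Sigma_hat ip s w n p m om) B \<longrightarrow>
                      norm (f - synth_n sc w n x)
                        \<le> norm (P f) * sqrt (1 + (onorm (\<lambda>g. synth_n sc w n (B *\<^sub>v Gamma_hat sc ip s w n p m om g)))\<^sup>2)))}
           \<ge> 1 - \<delta>))"
proof -
  have set: "setting sc ip s w n"
    unfolding setting_def setting_axioms_def using hilbI[OF H] n_pos WS ons onw by blast
  interpret S: setting sc ip s w n by (rule set)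
  have part3: "real m \<ge> 8 / 3 * real n * ln (2 * real n / \<delta>) \<Longrightarrow> 0 < \<delta> \<Longrightarrow> \<delta> < 1 \<Longrightarrow>
    measure_pmf.prob (Pi_pmf {..<m} 0 (\<lambda>_. embed_pmf (pdist ip s w n)))
           {om. invertible_mat (Sigma_hat ip s w n (pdist ip s w n) m om) \<and>
                (\<exists>x\<in>carrier_vec n.
                   (\<forall>y\<in>carrier_vec n. wls_obj sc ip s w n (pdist ip s w n) m om f x \<le> wls_obj sc ip s w n (pdist ip s w n) m om f y) \<and>
                   (\<forall>y\<in>carrier_vec n. wls_obj sc ip s w n (pdist ip s w n) m om f y \<le> wls_obj sc ip s w n (pdist ip s w n) m om f x \<longrightarrow> y = x) \<and>
                   (\<forall>B\<in>carrier_mat n n. inverts_mat (Sigma_hat ip s w n (pdist ip s w n) m om) B \<longrightarrow>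
                      norm (f - synth_n sc w n x)
                        \<le> norm (oproj ip (orth ip (lspan sc (w ` {..<n}))) f) * sqrt (1 + (onorm (\<lambda>g. synth_n sc w n (B *\<^sub>v Gamma_hat sc ip s w n (pdist ip s w n) m om g)))\<^sup>2)))}
           \<ge> 1 - \<delta>" for f \<delta> m
  proof -
    assume mge: "real m \<ge> 8 / 3 * real n * ln (2 * real n / \<delta>)" and d0: "0 < \<delta>" and d1: "\<delta> < 1"
    have n1: "real n \<ge> 1" using n_pos by simp
    have arg: "2 * real n / \<delta> > 1" using n1 d0 d1 by (simp add: field_simps)
    have lnpos: "ln (2 * real n / \<delta>) > 0" using arg by simp
    have mpos: "m > 0"
    proof -
      have "8 / 3 * real n * ln (2 * real n / \<delta>) > 0" using lnpos n1 by simp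
      then show ?thesis using mge by linarith
    qed
    let ?M = "Pi_pmf {..<m} (0::nat) (\<lambda>_. S.P0)"
    let ?E = "{om. invertible_mat (Sigma_hat ip s w n (pdist ip s w n) m om) \<and>
                (\<exists>x\<in>carrier_vec n.
                   (\<forall>y\<in>carrier_vec n. wls_obj sc ip s w n (pdist ip s w n) m om f x \<le> wls_obj sc ip s w n (pdist ip s w n) m om f y) \<and>
                   (\<forall>y\<in>carrier_vec n. wls_obj sc ip s w n (pdist ip s w n) m om f y \<le> wls_obj sc ip s w n (pdist ip s w n) m om f x \<longrightarrow> y = x) \<and>
                   (\<forall>B\<in>carrier_mat n n. inverts_mat (Sigma_hat ip s w n (pdist ip s w n) m om) B \<longrightarrow>
                      norm (f - synth_n sc w n x)
                        \<le> norm (oproj ip (orth ip (lspan sc (w ` {..<n}))) f) * sqrt (1 + (onorm (\<lambda>g. synth_n sc w n (B *\<^sub>v Gamma_hat sc ip s w n (pdist ip s w n) m om g)))\<^sup>2)))}"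
    let ?r = "1 - 1 / real n"
    have sub: "UNIV - S.Bad m [] \<subseteq> ?E"
    proof
      fix om assume "om \<in> UNIV - S.Bad m []"
      then have len: "length (proc n S.vv [] om m) \<ge> n" by (simp add: S.Bad_def)
      have onl0: "onl n []" by (simp add: onl_def)
      have g: "S.good m om"
        unfolding S.good_def
      proof (intro ballI impI)
        fix z assume z: "z \<in> carrier_vec n" and zt: "\<forall>t<m. cip n (S.vv (om t)) z = 0"
        have "\<And>i. i < length (proc n S.vv [] om m) \<Longrightarrow> cip n (proc n S.vv [] om m ! i) z = 0"
          by (rule proc_orth) (use zt in auto)
        then show "z = 0\<^sub>v n"
          by (rule onl_span[OF proc_onl[OF onl0] len z])
      qed
      show "om \<in> ?E" using S.good_invertible[OF g mpos] S.wls_main[OF mpos g, of f] by blast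
    qed
    have bad: "measure_pmf.prob ?M (S.Bad m []) \<le> real n * ?r ^ m"
    proof -
      have "ennreal (measure_pmf.prob ?M (S.Bad m [])) = emeasure (measure_pmf ?M) (S.Bad m [])"
        by (simp add: measure_pmf.emeasure_eq_measure)
      also have "\<dots> \<le> ennreal (real n * ?r ^ m)"
        using S.prob_bad[of "[]" m] by (simp add: onl_def)
      finally have le: "ennreal (measure_pmf.prob ?M (S.Bad m [])) \<le> ennreal (real n * ?r ^ m)" .
      have "0 \<le> real n * ?r ^ m" using n1 by simp
      then show ?thesis using le ennreal_le_iff by blast
    qed
    have small: "real n * ?r ^ m \<le> \<delta>"
    proof -
      have r0: "0 \<le> ?r" using n1 by simp
      have "?r \<le> exp (- (1 / real n))" using exp_ge_add_one_self[of "- (1 / real n)"] by simp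
      then have "?r ^ m \<le> exp (- (1 / real n)) ^ m" by (rule power_mono[OF _ r0])
      also have "\<dots> = exp (- (real m / real n))" by (simp add: exp_of_nat_mult[symmetric])
      also have "\<dots> \<le> exp (- ln (2 * real n / \<delta>))"
      proof -
        have "real m / real n \<ge> 8 / 3 * ln (2 * real n / \<delta>)"
          using mge n1 by (simp add: field_simps)
        then have "real m / real n \<ge> ln (2 * real n / \<delta>)" using lnpos by linarith
        then show ?thesis by simp
      qed
      also have "\<dots> = \<delta> / (2 * real n)"
        using arg d0 n1 by (simp add: exp_minus ln_inverse[symmetric])
      finally have "?r ^ m \<le> \<delta> / (2 * real n)" .
      then have "real n * ?r ^ m \<le> real n * (\<delta> / (2 * real n))"
        by (rule mult_left_mono) simp
      also have "\<dots> = \<delta> / 2" using n1 by simp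
      finally show ?thesis using d0 by simp
    qed
    have "1 - \<delta> \<le> 1 - measure_pmf.prob ?M (S.Bad m [])" using bad small by linarith
    also have "\<dots> = measure_pmf.prob ?M (UNIV - S.Bad m [])"
      using measure_pmf.prob_compl[of "S.Bad m []" ?M] by simp
    also have "\<dots> \<le> measure_pmf.prob ?M ?E"
      by (rule measure_pmf.finite_measure_mono[OF sub]) simp
    finally show ?thesis unfolding S.P0_def .
  qed
  show ?thesis
    unfolding p_def P_def
    using S.p_nonneg S.p_has_sum part3 by blast
qed

end
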